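(* Let $\Gamma$ be a 3-colex and $E=\prod_{\nu\in\Omega}Z_\nu$ a $Z$-type error on the 3D color code on $\Gamma$. Suppose that for each unordered pair $\{c,c'\}$ of distinct colors, $\mathsf E_{cc'}$ is a set of edges of $\Gamma^{*\setminus cc'}$ such that $\prod_{e\in\mathsf E_{cc'}}Z_e=\pi_{cc'}(E)\,S_{cc'}$ for some $Z$-stabilizer $S_{cc'}$ of the 3D toric code on $\Gamma^{*\setminus cc'}$. Then $\mathsf E=\sum_{\{c,c'\}}\mathsf E_{cc'}$ equals $\delta(E\overline S)$ for some $Z$-stabilizer $\overline S$ of the color code; that is, $\mathsf E$ estimates the edge boundary $\delta E$ up to the edge boundary of a $Z$-stabilizer of the color code.
   Context: Colors are $\{r,b,g,y\}$. A 3-colex $\Gamma$ is a 3-dimensional cell complex without boundary in which every vertex is 4-valent and lies in exactly four 3-cells, and whose 3-cells are properly 4-colored: every face lies in exactly two 3-cells, which have different colors. The dual complex $\Gamma^*$ has an $i$-cell for every $(3-i)$-cell of $\Gamma$, with incidences reversed; every 3-cell of $\Gamma^*$ is a tetrahedron. A vertex of $\Gamma^*$ is given the color of the corresponding 3-cell of $\Gamma$, so the four vertices of each tetrahedron have distinct colors. An edge of $\Gamma^*$ with endpoint colors $x,y$ is an $xy$-edge; each tetrahedron has exactly one $xy$-edge for each pair $x\ne y$. The 3D color code on $\Gamma$ has one qubit per tetrahedron $\nu$ of $\Gamma^*$, $X$-stabilizer generators $B^X_v=\prod_{\nu\ni v}X_\nu$ for vertices $v$ and $Z$-stabilizer generators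 $B^Z_e=\prod_{\nu\supset e}Z_\nu$ for edges $e$; $Z$-stabilizers are products of the $B^Z_e$. For distinct colors $c,c'$ let $\{d,d'\}$ be the remaining two colors. The minor complex $\Gamma^{*\setminus cc'}$ has as vertices the $d$- and $d'$-vertices of $\Gamma^*$, as edges the $dd'$-edges of $\Gamma^*$, one face $f_e$ for each $cc'$-edge $e$ of $\Gamma^*$ whose boundary $\partial f_e$ is the set of $dd'$-edges of the tetrahedra containing $e$ (these form a cycle), and one 3-cell for each vertex of color $c$ or $c'$. The 3D toric code on $\Gamma^{*\setminus cc'}$ has qubits on edges, $X$-checks $\prod_{e\ni v}X_e$ on vertices and $Z$-stabilizer generators $\prod_{t\in\partial f}Z_t$ for faces $f$; its $Z$-stabilizers are products of these. For a tetrahedron $\nu$, $\pi_{cc'}(\nu)$ is its unique $dd'$-edge, and $\pi_{cc'}(\prod_{\nu\in\Omega}Z_\nu)=\prod_{\nu\in\Omega}Z_{\pi_{cc'}(\nu)}$ (with $Z^2=I$); $\pi_{cc'}=\pi_{c'c}$. The edge boundary of a $Z$-operator $E=\prod_{\nu\in\Omega}Z_\nu$ is $\delta E=\sum_{\nu\in\Omega}\sum_{\{x,y\}}\pi_{xy}(\nu)$, the sum over the six unordered pairs of distinct colors (i.e. over the six edges of $\nu$), taken mod 2 as a set of edges of $\Gamma^*$. Sums of edge sets are mod-2 (symmetric difference). *)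

theory Defs
  imports Main
begin

text \<open>A 3-colex Gamma is encoded by its 1-skeleton: the vertex set V of Gamma and, for every
  colour x, the fixed-point-free involution sigma x sending a vertex v to the other endpoint
  of the unique x-coloured edge at v (an edge of Gamma gets the colour of the one 3-cell
  at its endpoints that does not contain it).  Vertices of Gamma are the tetrahedra of the
  dual complex (= qubits).  An i-cell of the dual complex is the orbit of a tetrahedron
  under the involutions of the complementary colours.\<close>

datatype color = Red | Blue | Green | Yellow

definition colpairs :: "color set set" where
  "colpairs = {{c, c'} | c c'. c \<noteq> c'}"

definition colex3 :: "'v set \<Rightarrow> (color \<Rightarrow> 'v \<Rightarrow> 'v) \<Rightarrow> bool" where
  "colex3 V \<sigma> \<longleftrightarrow> finite V \<and>
     (\<forall>x. \<forall>v\<in>V. \<sigma> x v \<in> V \<and> \<sigma> x v \<noteq> v \<and> \<sigma> x (\<sigma> x v) = v)"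

inductive_set orb :: "(color \<Rightarrow> 'v \<Rightarrow> 'v) \<Rightarrow> color set \<Rightarrow> 'v \<Rightarrow> 'v set"
  for \<sigma> C v where
  orb_refl: "v \<in> orb \<sigma> C v"
| orb_step: "u \<in> orb \<sigma> C v \<Longrightarrow> x \<in> C \<Longrightarrow> \<sigma> x u \<in> orb \<sigma> C v"

text \<open>An edge of the dual complex: its (unordered) pair of endpoint colours P together with
  the set of tetrahedra containing it (an orbit under the two colours not in P).\<close>
type_synonym 'v dedge = "color set \<times> 'v set"

definition msum :: "('i \<Rightarrow> 'a set) \<Rightarrow> 'i set \<Rightarrow> 'a set" where
  "msum F I = {a. odd (card {i \<in> I. a \<in> F i})}"

definition symdiff :: "'a set \<Rightarrow> 'a set \<Rightarrow> 'a set" where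
  "symdiff A B = (A - B) \<union> (B - A)"

definition dual_edges :: "(color \<Rightarrow> 'v \<Rightarrow> 'v) \<Rightarrow> 'v set \<Rightarrow> 'v dedge set" where
  "dual_edges \<sigma> V = {(P, orb \<sigma> (- P) \<nu>) | P \<nu>. P \<in> colpairs \<and> \<nu> \<in> V}"

definition tet_contains :: "(color \<Rightarrow> 'v \<Rightarrow> 'v) \<Rightarrow> 'v \<Rightarrow> 'v dedge \<Rightarrow> bool" where
  "tet_contains \<sigma> \<nu> e \<longleftrightarrow> orb \<sigma> (- fst e) \<nu> = snd e"

text \<open>pi_{cc'}(nu) for P = {c,c'}: the unique dd'-edge of nu, {d,d'} = - P.\<close>
definition proj :: "(color \<Rightarrow> 'v \<Rightarrow> 'v) \<Rightarrow> color set \<Rightarrow> 'v \<Rightarrow> 'v dedge" where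
  "proj \<sigma> P \<nu> = (- P, orb \<sigma> P \<nu>)"

definition pi_op :: "(color \<Rightarrow> 'v \<Rightarrow> 'v) \<Rightarrow> color set \<Rightarrow> 'v set \<Rightarrow> 'v dedge set" where
  "pi_op \<sigma> P \<Omega> = msum (\<lambda>\<nu>. {proj \<sigma> P \<nu>}) \<Omega>"

definition edge_bd :: "(color \<Rightarrow> 'v \<Rightarrow> 'v) \<Rightarrow> 'v set \<Rightarrow> 'v dedge set" where
  "edge_bd \<sigma> \<Omega> = msum (\<lambda>P. pi_op \<sigma> P \<Omega>) colpairs"

definition BZ :: "(color \<Rightarrow> 'v \<Rightarrow> 'v) \<Rightarrow> 'v set \<Rightarrow> 'v dedge \<Rightarrow> 'v set" where
  "BZ \<sigma> V e = {\<nu> \<in> V. tet_contains \<sigma> \<nu> e}"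

definition cc_Zstab :: "(color \<Rightarrow> 'v \<Rightarrow> 'v) \<Rightarrow> 'v set \<Rightarrow> 'v set \<Rightarrow> bool" where
  "cc_Zstab \<sigma> V S \<longleftrightarrow> (\<exists>F. finite F \<and> F \<subseteq> dual_edges \<sigma> V \<and> S = msum (BZ \<sigma> V) F)"

text \<open>Minor complex for P = {c,c'}: edges are the dd'-edges, faces f_e are indexed by the
  cc'-edges e.\<close>
definition minor_edges :: "(color \<Rightarrow> 'v \<Rightarrow> 'v) \<Rightarrow> 'v set \<Rightarrow> color set \<Rightarrow> 'v dedge set" where
  "minor_edges \<sigma> V P = {proj \<sigma> P \<nu> | \<nu>. \<nu> \<in> V}"

definition minor_faces :: "(color \<Rightarrow> 'v \<Rightarrow> 'v) \<Rightarrow> 'v set \<Rightarrow> color set \<Rightarrow> 'v dedge set" where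
  "minor_faces \<sigma> V P = {(P, orb \<sigma> (- P) \<nu>) | \<nu>. \<nu> \<in> V}"

text \<open>Boundary of f_e: the dd'-edges of the tetrahedra containing e (taken mod 2; in a
  colex these edges form a cycle, so each occurs once).\<close>
definition face_bd :: "(color \<Rightarrow> 'v \<Rightarrow> 'v) \<Rightarrow> 'v set \<Rightarrow> color set \<Rightarrow> 'v dedge \<Rightarrow> 'v dedge set" where
  "face_bd \<sigma> V P e = msum (\<lambda>\<nu>. {proj \<sigma> P \<nu>}) {\<nu> \<in> V. tet_contains \<sigma> \<nu> e}"

definition tc_Zstab :: "(color \<Rightarrow> 'v \<Rightarrow> 'v) \<Rightarrow> 'v set \<Rightarrow> color set \<Rightarrow> 'v dedge set \<Rightarrow> bool" where
  "tc_Zstab \<sigma> V P S \<longleftrightarrow>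
     (\<exists>F. finite F \<and> F \<subseteq> minor_faces \<sigma> V P \<and> S = msum (face_bd \<sigma> V P) F)"

end

theory Submission imports Defs "HOL-Library.Z2" begin

abbreviation hh :: "'a set \<Rightarrow> 'a \<Rightarrow> bit" where "hh A a \<equiv> of_bool (a \<in> A)"

lemma bit_of_nat: "(of_nat n :: bit) = of_bool (odd n)"
  by (induction n) (auto simp: add.commute)

lemma bit_add_self[simp]: "(x::bit) + x = 0"
  by (cases x) (auto simp flip: one_add_one)

lemma hh_msum: "finite I \<Longrightarrow> hh (msum F I) a = (\<Sum>i\<in>I. hh (F i) a)"
  by (simp add: msum_def bit_of_nat Int_def conj_commute)

lemma hh_symdiff: "hh (symdiff A B) a = hh A a + hh B a"
  by (auto simp: symdiff_def)

lemma set_eq_hh: "(\<And>a. hh A a = hh B a) \<Longrightarrow> A = B"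
  by (auto simp: set_eq_iff) (metis of_bool_eq_iff)+

lemma sum_symdiff:
  assumes "finite A" "finite B"
  shows "(\<Sum>x\<in>symdiff A B. g x) = (\<Sum>x\<in>A. g x) + (\<Sum>x\<in>B. (g x :: bit))"
proof -
  have e: "symdiff A B = (A \<union> B) - (A \<inter> B)" by (auto simp: symdiff_def)
  have "(\<Sum>x\<in>A \<union> B. g x) = (\<Sum>x\<in>(A \<union> B) - (A \<inter> B). g x) + (\<Sum>x\<in>A \<inter> B. g x)"
    by (rule sum.subset_diff) (use assms in auto)
  then have "(\<Sum>x\<in>A \<union> B. g x) = (\<Sum>x\<in>symdiff A B. g x) + (\<Sum>x\<in>A \<inter> B. g x)"
    unfolding e .
  moreover have "(\<Sum>x\<in>A \<union> B. g x) + (\<Sum>x\<in>A \<inter> B. g x) = (\<Sum>x\<in>A. g x) + (\<Sum>x\<in>B. g x)"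
    by (rule sum.union_inter[OF assms])
  ultimately have "(\<Sum>x\<in>A. g x) + (\<Sum>x\<in>B. g x) = (\<Sum>x\<in>symdiff A B. g x) + ((\<Sum>x\<in>A \<inter> B. g x) + (\<Sum>x\<in>A \<inter> B. g x))"
    by (simp only: add.assoc)
  then show ?thesis by simp
qed

lemma finite_msum: "finite I \<Longrightarrow> (\<And>i. i \<in> I \<Longrightarrow> finite (F i)) \<Longrightarrow> finite (msum F I)"
proof (rule finite_subset[of _ "\<Union>i\<in>I. F i"])
  show "msum F I \<subseteq> (\<Union>i\<in>I. F i)"
  proof
    fix x assume "x \<in> msum F I"
    then have "odd (card {i \<in> I. x \<in> F i})" by (simp add: msum_def)
    then have "{i \<in> I. x \<in> F i} \<noteq> {}" by (metis card.empty even_zero)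
    then show "x \<in> (\<Union>i\<in>I. F i)" by blast
  qed
qed auto

lemma msum_insert: "finite I \<Longrightarrow> i \<notin> I \<Longrightarrow> msum F (insert i I) = symdiff (F i) (msum F I)"
  by (rule set_eq_hh) (simp add: hh_msum hh_symdiff del: sum_of_bool_eq)

lemma sum_msum:
  assumes "finite I" "\<And>i. i \<in> I \<Longrightarrow> finite (F i)"
  shows "(\<Sum>x\<in>msum F I. g x) = (\<Sum>i\<in>I. \<Sum>x\<in>F i. (g x :: bit))"
  using assms
proof (induction I rule: finite_induct)
  case empty then show ?case by (simp add: msum_def)
next
  case (insert i I)
  then show ?case by (simp add: msum_insert sum_symdiff finite_msum)
qed

lemma even_inv:
  assumes "finite B" "\<forall>x\<in>B. f x \<in> B \<and> f x \<noteq> x \<and> f (f x) = x"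
  shows "even (card B)"
  using assms
proof (induction "card B" arbitrary: B rule: less_induct)
  case less
  show ?case
  proof (cases "B = {}")
    case False
    then obtain x where x: "x \<in> B" by auto
    let ?B = "B - {x, f x}"
    have fx: "f x \<in> B" "f x \<noteq> x" using less.prems x by auto
    have c2: "card {x, f x} = 2" using fx by simp
    have le: "card {x, f x} \<le> card B" using fx x less.prems by (intro card_mono) auto
    have "card ?B = card B - card {x, f x}" using less.prems x fx
      by (intro card_Diff_subset) auto
    then have c: "card B = card ?B + 2" using c2 le by simp
    have cl: "\<forall>y\<in>?B. f y \<in> ?B \<and> f y \<noteq> y \<and> f (f y) = y"
    proof
      fix y assume y: "y \<in> ?B"
      have "f y \<in> B" "f y \<noteq> y" "f (f y) = y" using y less.prems by auto
      moreover have "f y \<noteq> x" using y \<open>f (f y) = y\<close> by auto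
      moreover have "f y \<noteq> f x" using y \<open>f (f y) = y\<close> less.prems x by (metis DiffD2 insertI1)
      ultimately show "f y \<in> ?B \<and> f y \<noteq> y \<and> f (f y) = y" by auto
    qed
    have lt: "card ?B < card B" using c by simp
    have fin: "finite ?B" using less.prems(1) by simp
    have "even (card ?B)"
      by (rule less.hyps[OF lt fin cl])
    then show ?thesis using c by simp
  qed simp
qed

lemma orb_trans0: "w \<in> orb \<sigma> C u \<Longrightarrow> u \<in> orb \<sigma> C v \<Longrightarrow> w \<in> orb \<sigma> C v"
proof (induction rule: orb.induct)
  case orb_refl then show ?case .
next
  case (orb_step u x) then show ?case by (blast intro: orb.orb_step)
qed
lemma orb_trans: "u \<in> orb \<sigma> C v \<Longrightarrow> w \<in> orb \<sigma> C u \<Longrightarrow> w \<in> orb \<sigma> C v"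
  by (rule orb_trans0)

lemma orb_sub: "u \<in> orb \<sigma> C v \<Longrightarrow> orb \<sigma> C u \<subseteq> orb \<sigma> C v"
  by (rule subsetI, rule orb_trans)

lemma orb_swap: "x \<in> C \<Longrightarrow> \<sigma> x (\<sigma> x v) = v \<Longrightarrow> orb \<sigma> C (\<sigma> x v) = orb \<sigma> C v"
  apply (rule equalityI)
   apply (rule orb_sub, rule orb_step, rule orb_refl, assumption)
  apply (rule orb_sub)
  apply (rule subst[where P="\<lambda>z. z \<in> orb \<sigma> C (\<sigma> x v)"], assumption)
  by (rule orb_step, rule orb_refl, assumption)

lemma colpairs_finite: "finite colpairs"
proof -
  have "(UNIV :: color set) = {Red, Blue, Green, Yellow}" using color.exhaust by blast
  then have "finite (UNIV :: color set)" by (metis finite.emptyI finite_insert)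
  then have "finite (Pow (UNIV::color set))" by (simp only: finite_Pow_iff)
  moreover have "colpairs \<subseteq> Pow UNIV" by auto
  ultimately show ?thesis by (rule finite_subset[rotated])
qed

lemma key:
  assumes col: "colex3 V \<sigma>" and P: "P \<in> colpairs" and Q: "Q \<in> colpairs" and "Q \<noteq> P"
    and nu0: "\<nu>0 \<in> V"
  shows "(\<Sum>\<nu>\<in>BZ \<sigma> V (P, orb \<sigma> (- P) \<nu>0). of_bool (proj \<sigma> Q \<nu> = a)) = (0::bit)"
proof -
  obtain d where d: "d \<in> Q" "d \<notin> P" using P Q \<open>Q \<noteq> P\<close> unfolding colpairs_def
    by (auto simp: doubleton_eq_iff) 
  let ?B = "BZ \<sigma> V (P, orb \<sigma> (- P) \<nu>0) \<inter> {\<nu>. proj \<sigma> Q \<nu> = a}"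
  have fin: "finite (BZ \<sigma> V (P, orb \<sigma> (- P) \<nu>0))" using col by (auto simp: colex3_def BZ_def)
  have "even (card ?B)"
  proof (rule even_inv[of _ "\<sigma> d"])
    show "finite ?B" using fin by simp
    show "\<forall>x\<in>?B. \<sigma> d x \<in> ?B \<and> \<sigma> d x \<noteq> x \<and> \<sigma> d (\<sigma> d x) = x"
    proof
      fix x assume x: "x \<in> ?B"
      then have xV: "x \<in> V" by (simp add: BZ_def)
      have inv: "\<sigma> d (\<sigma> d x) = x" "\<sigma> d x \<noteq> x" "\<sigma> d x \<in> V" using col xV by (auto simp: colex3_def)
      have "orb \<sigma> (- P) (\<sigma> d x) = orb \<sigma> (- P) x" using d inv by (intro orb_swap) auto
      moreover have "orb \<sigma> Q (\<sigma> d x) = orb \<sigma> Q x" using d inv by (intro orb_swap) auto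
      ultimately show "\<sigma> d x \<in> ?B \<and> \<sigma> d x \<noteq> x \<and> \<sigma> d (\<sigma> d x) = x"
        using x inv by (auto simp: BZ_def tet_contains_def proj_def)
    qed
  qed
  then show ?thesis using fin by (simp add: bit_of_nat)
qed

theorem theorem4:
  fixes V :: "'v set" and \<sigma> :: "color \<Rightarrow> 'v \<Rightarrow> 'v" and \<Omega> :: "'v set"
    and Es :: "color set \<Rightarrow> 'v dedge set"
  assumes "colex3 V \<sigma>"
    and "\<Omega> \<subseteq> V"
    and "\<forall>P\<in>colpairs. Es P \<subseteq> minor_edges \<sigma> V P \<and>
           (\<exists>S. tc_Zstab \<sigma> V P S \<and> Es P = symdiff (pi_op \<sigma> P \<Omega>) S)"
  shows "\<exists>Sbar. cc_Zstab \<sigma> V Sbar \<and> msum Es colpairs = edge_bd \<sigma> (symdiff \<Omega> Sbar)"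
proof -
  have col: "colex3 V \<sigma>" by fact
  have finV: "finite V" using assms(1) by (simp add: colex3_def)
  have "\<forall>P\<in>colpairs. \<exists>F. finite F \<and> F \<subseteq> minor_faces \<sigma> V P \<and>
          Es P = symdiff (pi_op \<sigma> P \<Omega>) (msum (face_bd \<sigma> V P) F)"
    using assms(3) by (auto simp: tc_Zstab_def)
  then obtain FF where FF: "\<And>P. P \<in> colpairs \<Longrightarrow> finite (FF P) \<and> FF P \<subseteq> minor_faces \<sigma> V P \<and>
          Es P = symdiff (pi_op \<sigma> P \<Omega>) (msum (face_bd \<sigma> V P) (FF P))"
    by metis
  define U where "U = (\<Union>P\<in>colpairs. FF P)"
  define Sbar where "Sbar = msum (BZ \<sigma> V) U"
  have finU: "finite U" unfolding U_def using colpairs_finite FF by blast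
  have Ude: "U \<subseteq> dual_edges \<sigma> V"
  proof
    fix e assume "e \<in> U"
    then obtain P where P: "P \<in> colpairs" "e \<in> FF P" by (auto simp: U_def)
    then have "e \<in> minor_faces \<sigma> V P" using FF by blast
    then show "e \<in> dual_edges \<sigma> V" using P by (auto simp: minor_faces_def dual_edges_def)
  qed
  have stab: "cc_Zstab \<sigma> V Sbar" unfolding cc_Zstab_def Sbar_def using finU Ude by blast
  define cnt where "cnt Q X a = (\<Sum>\<nu>\<in>X. (of_bool (proj \<sigma> Q \<nu> = a)::bit))" for Q X a
  have hpi: "hh (pi_op \<sigma> Q X) a = cnt Q X a" if "finite X" for Q X a
    using that by (simp add: pi_op_def hh_msum cnt_def eq_commute del: sum_of_bool_eq)
  have finBZ: "finite (BZ \<sigma> V e)" for e by (rule finite_subset[OF _ finV]) (auto simp: BZ_def)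
  have fbd: "face_bd \<sigma> V P e = pi_op \<sigma> P (BZ \<sigma> V e)" for P e
    by (simp add: face_bd_def pi_op_def BZ_def)
  have finSbar: "finite Sbar" unfolding Sbar_def using finite_msum finBZ finU by blast
  have finO: "finite \<Omega>" using finV assms(2) finite_subset by blast
  have K: "(\<Sum>Q\<in>colpairs. cnt Q (BZ \<sigma> V e) a) = cnt P (BZ \<sigma> V e) a"
    if P: "P \<in> colpairs" and e: "e \<in> FF P" for P e a
  proof -
    have "e \<in> minor_faces \<sigma> V P" using FF P e by blast
    then obtain \<nu>0 where nu0: "\<nu>0 \<in> V" "e = (P, orb \<sigma> (- P) \<nu>0)" by (auto simp: minor_faces_def)
    have z: "(\<Sum>Q\<in>colpairs - {P}. cnt Q (BZ \<sigma> V e) a) = 0"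
      by (rule sum.neutral) (use key[OF col P _ _ nu0(1)] nu0(2) in \<open>auto simp: cnt_def\<close>)
    show ?thesis using sum.remove[OF colpairs_finite P, of "\<lambda>Q. cnt Q (BZ \<sigma> V e) a"] z by simp
  qed
  show ?thesis
  proof (intro exI conjI, rule stab, rule set_eq_hh)
    fix a
    have L: "hh (msum Es colpairs) a = (\<Sum>P\<in>colpairs. cnt P \<Omega> a + (\<Sum>e\<in>FF P. cnt P (BZ \<sigma> V e) a))"
      unfolding hh_msum[OF colpairs_finite]
    proof (rule sum.cong[OF refl])
      fix P assume P: "P \<in> colpairs"
      show "hh (Es P) a = cnt P \<Omega> a + (\<Sum>e\<in>FF P. cnt P (BZ \<sigma> V e) a)"
        using FF[OF P] by (simp add: hh_symdiff hpi finO hh_msum fbd finBZ del: sum_of_bool_eq)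
    qed
    have cS: "cnt Q Sbar a = (\<Sum>P\<in>colpairs. \<Sum>e\<in>FF P. cnt Q (BZ \<sigma> V e) a)" for Q
    proof -
      have "cnt Q Sbar a = (\<Sum>e\<in>U. cnt Q (BZ \<sigma> V e) a)"
        unfolding cnt_def Sbar_def by (rule sum_msum[OF finU finBZ])
      also have "\<dots> = (\<Sum>P\<in>colpairs. \<Sum>e\<in>FF P. cnt Q (BZ \<sigma> V e) a)"
        unfolding U_def
      proof (rule sum.UNION_disjoint[OF colpairs_finite])
        show "\<forall>P\<in>colpairs. finite (FF P)" using FF by blast
        show "\<forall>P\<in>colpairs. \<forall>P'\<in>colpairs. P \<noteq> P' \<longrightarrow> FF P \<inter> FF P' = {}"
        proof (intro ballI impI)
          fix P P' assume "P \<in> colpairs" "P' \<in> colpairs" "P \<noteq> P'"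
          then have "FF P \<subseteq> minor_faces \<sigma> V P" "FF P' \<subseteq> minor_faces \<sigma> V P'" using FF by blast+
          then show "FF P \<inter> FF P' = {}" using \<open>P \<noteq> P'\<close> by (auto simp: minor_faces_def)
        qed
      qed
      finally show ?thesis .
    qed
    have "hh (edge_bd \<sigma> (symdiff \<Omega> Sbar)) a = (\<Sum>Q\<in>colpairs. cnt Q \<Omega> a + cnt Q Sbar a)"
      unfolding edge_bd_def hh_msum[OF colpairs_finite]
    proof (rule sum.cong[OF refl])
      fix Q
      have "finite (symdiff \<Omega> Sbar)" using finO finSbar by (simp add: symdiff_def)
      then show "hh (pi_op \<sigma> Q (symdiff \<Omega> Sbar)) a = cnt Q \<Omega> a + cnt Q Sbar a"
        by (simp add: hpi cnt_def sum_symdiff[OF finO finSbar] del: sum_of_bool_eq)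
    qed
    also have "\<dots> = (\<Sum>Q\<in>colpairs. cnt Q \<Omega> a) + (\<Sum>Q\<in>colpairs. \<Sum>P\<in>colpairs. \<Sum>e\<in>FF P. cnt Q (BZ \<sigma> V e) a)"
      by (simp only: sum.distrib cS)
    also have "(\<Sum>Q\<in>colpairs. \<Sum>P\<in>colpairs. \<Sum>e\<in>FF P. cnt Q (BZ \<sigma> V e) a)
       = (\<Sum>P\<in>colpairs. \<Sum>Q\<in>colpairs. \<Sum>e\<in>FF P. cnt Q (BZ \<sigma> V e) a)"
      by (rule sum.swap)
    also have "\<dots> = (\<Sum>P\<in>colpairs. \<Sum>e\<in>FF P. \<Sum>Q\<in>colpairs. cnt Q (BZ \<sigma> V e) a)"
      by (rule sum.cong[OF refl], rule sum.swap)
    also have "\<dots> = (\<Sum>P\<in>colpairs. \<Sum>e\<in>FF P. cnt P (BZ \<sigma> V e) a)"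
      by (rule sum.cong[OF refl], rule sum.cong[OF refl], rule K)
    finally show "hh (msum Es colpairs) a = hh (edge_bd \<sigma> (symdiff \<Omega> Sbar)) a"
      unfolding L by (simp only: sum.distrib)
  qed
qed

end
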